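(* Let $\mathcal{S}$ be an instance space, $\mathcal{W}$ a hypothesis space, and $\ell:\mathcal{S}\times\mathcal{W}\to\mathbb{R}^+$ a nonnegative loss. Consider a distributed learning problem with $K$ users: for each $k\in\{1,\ldots,K\}$, user $k$ holds a dataset $\mathbf{S}_k=(S_{k,1},\ldots,S_{k,n_k})$ with law $\pi_k^{\otimes n_k}$ for an (unknown) distribution $\pi_k$ on $\mathcal{S}$, the datasets $\mathbf{S}_1,\ldots,\mathbf{S}_K$ being independent; user $k$ outputs $W_k\in\mathcal{W}$ according to a conditional distribution $P_{W_k|\mathbf{S}_k}$, and a fusion algorithm outputs $\widehat W\in\mathcal{W}$ according to $P_{\widehat W|W_1,\ldots,W_K}$. Denote this distributed learning algorithm by $\mathcal{A}_K$, let $n=\sum_{k=1}^K n_k$, $\mu=\prod_{k=1}^K\pi_k$, and let $P_{\widehat W}$ be the marginal law of $\widehat W$. For each $k$, let $(\bar S_k,\bar W)\sim\pi_k\otimes P_{\widehat W}$ (independent), let $\Lambda_k(\lambda)$ be the cumulant generating function of $\ell(\bar S_k,\bar W)$, i.e. $\Lambda_k(\lambda)=\log\mathbb{E}\big[e^{\lambda(\ell(\bar S_k,\bar W)-\mathbb{E}[\ell(\bar S_k,\bar W)])}\big]$, and suppose there are $b_{k\pm}\in(0,\infty]$ and convex functions $\psi_{k\pm}:[0,b_{k\pm})\to\mathbb{R}$ with $\psi_{k\pm}(0)=\psi_{k\pm}'(0)=0$ such that $\Lambda_k(\lambda)\le\psi_{k+}(\lambda)$ for $\lambda\in[0,b_{k+})$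 and $\Lambda_k(\lambda)\le\psi_{k-}(-\lambda)$ for $\lambda\in(-b_{k-},0]$. Then \[ -\frac1n\sum_{k=1}^K\sum_{i=1}^{n_k}\psi_{k+}^{\ast-1}\big(I(S_{k,i};\widehat W)\big)\;\le\;{\rm gen}(\mu;\mathcal{A}_K)\;\le\;\frac1n\sum_{k=1}^K\sum_{i=1}^{n_k}\psi_{k-}^{\ast-1}\big(I(S_{k,i};\widehat W)\big). \]
   Context: For $w\in\mathcal{W}$, $L_{\pi_k}(w)=\mathbb{E}_{S\sim\pi_k}[\ell(S,w)]$ and $L_{\mathbf{S}_k}(w)=\frac1{n_k}\sum_{i=1}^{n_k}\ell(S_{k,i},w)$. The distributed expected risk is $L_\mu(w)=\sum_{k=1}^K\frac{n_k}{n}L_{\pi_k}(w)$, the distributed empirical risk is $L_{\mathbf{S}_K}(w)=\sum_{k=1}^K\frac{n_k}{n}L_{\mathbf{S}_k}(w)$, and the expected generalization error is ${\rm gen}(\mu;\mathcal{A}_K)=\mathbb{E}[L_\mu(\widehat W)-L_{\mathbf{S}_K}(\widehat W)]$. $I(\cdot;\cdot)$ is mutual information. For a convex $\psi:[0,b)\to\mathbb{R}$, $\psi^\ast(x)=\sup_{\lambda\in[0,b)}(\lambda x-\psi(\lambda))$ is its Legendre dual and $\psi^{\ast-1}$ the inverse of $\psi^\ast$ (on $[0,\infty)$). *)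

theory Defs
  imports "HOL-Probability.Probability"
begin

definition sample_index :: "nat \<Rightarrow> (nat \<Rightarrow> nat) \<Rightarrow> (nat \<times> nat) set" where
  "sample_index K n = {(k, i). k < K \<and> i < n k}"

definition data_law :: "nat \<Rightarrow> (nat \<Rightarrow> nat) \<Rightarrow> (nat \<Rightarrow> 's measure) \<Rightarrow> (nat \<times> nat \<Rightarrow> 's) measure" where
  "data_law K n \<pi> = PiM (sample_index K n) (\<lambda>ki. \<pi> (fst ki))"

definition user_data :: "(nat \<Rightarrow> nat) \<Rightarrow> (nat \<times> nat \<Rightarrow> 's) \<Rightarrow> nat \<Rightarrow> (nat \<Rightarrow> 's)" where
  "user_data n d k = (\<lambda>i\<in>{..<n k}. d (k, i))"

text \<open>Conditional law of (W_1,...,W_K) given all data: users act independently,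
  user k through the kernel P_{W_k|S_k} = kappa k.\<close>
definition users_law :: "nat \<Rightarrow> (nat \<Rightarrow> nat) \<Rightarrow> (nat \<Rightarrow> (nat \<Rightarrow> 's) \<Rightarrow> 'w measure)
    \<Rightarrow> (nat \<times> nat \<Rightarrow> 's) \<Rightarrow> (nat \<Rightarrow> 'w) measure" where
  "users_law K n \<kappa> d = PiM {..<K} (\<lambda>k. \<kappa> k (user_data n d k))"

text \<open>Joint law of (all data, W-hat); fusion kernel phi = P_{W-hat|W_1..W_K}.\<close>
definition joint_law :: "'s measure \<Rightarrow> 'w measure \<Rightarrow> nat \<Rightarrow> (nat \<Rightarrow> nat) \<Rightarrow> (nat \<Rightarrow> 's measure)
    \<Rightarrow> (nat \<Rightarrow> (nat \<Rightarrow> 's) \<Rightarrow> 'w measure) \<Rightarrow> ((nat \<Rightarrow> 'w) \<Rightarrow> 'w measure)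
    \<Rightarrow> ((nat \<times> nat \<Rightarrow> 's) \<times> 'w) measure" where
  "joint_law Ms Mw K n \<pi> \<kappa> \<phi> =
     bind (data_law K n \<pi>)
       (\<lambda>d. distr (bind (users_law K n \<kappa> d) \<phi>)
               (PiM (sample_index K n) (\<lambda>_. Ms) \<Otimes>\<^sub>M Mw) (\<lambda>w. (d, w)))"

definition pop_risk :: "('s \<Rightarrow> 'w \<Rightarrow> real) \<Rightarrow> 's measure \<Rightarrow> 'w \<Rightarrow> real" where
  "pop_risk loss pik w = (\<integral>s. loss s w \<partial>pik)"

definition emp_risk :: "('s \<Rightarrow> 'w \<Rightarrow> real) \<Rightarrow> (nat \<Rightarrow> nat) \<Rightarrow> (nat \<times> nat \<Rightarrow> 's) \<Rightarrow> nat \<Rightarrow> 'w \<Rightarrow> real" where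
  "emp_risk loss n d k w = (1 / real (n k)) * (\<Sum>i<n k. loss (d (k, i)) w)"

definition dist_pop_risk :: "('s \<Rightarrow> 'w \<Rightarrow> real) \<Rightarrow> nat \<Rightarrow> (nat \<Rightarrow> nat) \<Rightarrow> (nat \<Rightarrow> 's measure) \<Rightarrow> 'w \<Rightarrow> real" where
  "dist_pop_risk loss K n \<pi> w = (\<Sum>k<K. (real (n k) / real (\<Sum>j<K. n j)) * pop_risk loss (\<pi> k) w)"

definition dist_emp_risk :: "('s \<Rightarrow> 'w \<Rightarrow> real) \<Rightarrow> nat \<Rightarrow> (nat \<Rightarrow> nat) \<Rightarrow> (nat \<times> nat \<Rightarrow> 's) \<Rightarrow> 'w \<Rightarrow> real" where
  "dist_emp_risk loss K n d w = (\<Sum>k<K. (real (n k) / real (\<Sum>j<K. n j)) * emp_risk loss n d k w)"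

definition gen_error :: "'s measure \<Rightarrow> 'w measure \<Rightarrow> ('s \<Rightarrow> 'w \<Rightarrow> real) \<Rightarrow> nat \<Rightarrow> (nat \<Rightarrow> nat)
    \<Rightarrow> (nat \<Rightarrow> 's measure) \<Rightarrow> (nat \<Rightarrow> (nat \<Rightarrow> 's) \<Rightarrow> 'w measure) \<Rightarrow> ((nat \<Rightarrow> 'w) \<Rightarrow> 'w measure) \<Rightarrow> real" where
  "gen_error Ms Mw loss K n \<pi> \<kappa> \<phi> =
     (\<integral>dw. dist_pop_risk loss K n \<pi> (snd dw) - dist_emp_risk loss K n (fst dw) (snd dw)
        \<partial>(joint_law Ms Mw K n \<pi> \<kappa> \<phi>))"

text \<open>Mutual information (in nats) of X and Y under M, as an extended real:
  the library value when the KL divergence is finite (well-defined), and +infinity otherwise.\<close>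
definition mutual_info :: "'a measure \<Rightarrow> 'b measure \<Rightarrow> 'c measure \<Rightarrow> ('a \<Rightarrow> 'b) \<Rightarrow> ('a \<Rightarrow> 'c) \<Rightarrow> ereal" where
  "mutual_info M S T X Y =
     (let P = distr M S X \<Otimes>\<^sub>M distr M T Y; Q = distr M (S \<Otimes>\<^sub>M T) (\<lambda>x. (X x, Y x)) in
      if absolutely_continuous P Q \<and> integrable Q (entropy_density (exp 1) P Q)
      then ereal (prob_space.mutual_information M (exp 1) S T X Y) else \<infinity>)"

definition cgf :: "'a measure \<Rightarrow> ('a \<Rightarrow> real) \<Rightarrow> real \<Rightarrow> real" where
  "cgf P f t = ln (\<integral>x. exp (t * (f x - (\<integral>y. f y \<partial>P))) \<partial>P)"

definition dom_b :: "ereal \<Rightarrow> real set" where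
  "dom_b b = {x. 0 \<le> x \<and> ereal x < b}"

definition legendre_dual :: "(real \<Rightarrow> real) \<Rightarrow> ereal \<Rightarrow> real \<Rightarrow> ereal" where
  "legendre_dual \<psi> b x = (SUP t\<in>dom_b b. ereal (t * x - \<psi> t))"

text \<open>Inverse of psi^* on [0,infinity) (psi^* is strictly increasing there where finite);
  rendered as the generalized inverse, which also gives psi^*-1(infinity) = infinity.\<close>
definition legendre_dual_inv :: "(real \<Rightarrow> real) \<Rightarrow> ereal \<Rightarrow> ereal \<Rightarrow> ereal" where
  "legendre_dual_inv \<psi> b y = (SUP x\<in>{x. 0 \<le> x \<and> legendre_dual \<psi> b x \<le> y}. ereal x)"

definition admissible_psi :: "(real \<Rightarrow> real) \<Rightarrow> ereal \<Rightarrow> bool" where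
  "admissible_psi \<psi> b \<longleftrightarrow> 0 < b \<and> convex_on (dom_b b) \<psi> \<and> \<psi> 0 = 0 \<and>
     (\<psi> has_real_derivative 0) (at 0 within dom_b b)"

end

theory Submission
  imports Defs
begin

lemma finite_sample_index: "finite (sample_index K n)"
proof -
  have "sample_index K n = Sigma {..<K} (\<lambda>k. {..<n k})"
    by (auto simp: sample_index_def)
  then show ?thesis by simp
qed

locale dl =
  fixes Ms :: "'s measure" and Mw :: "'w measure"
    and K :: nat and n :: "nat \<Rightarrow> nat"
    and \<pi> :: "nat \<Rightarrow> 's measure"
    and \<kappa> :: "nat \<Rightarrow> (nat \<Rightarrow> 's) \<Rightarrow> 'w measure"
    and \<phi> :: "(nat \<Rightarrow> 'w) \<Rightarrow> 'w measure"
  assumes pi_prob: "\<And>k. k < K \<Longrightarrow> prob_space (\<pi> k)"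
    and pi_sets: "\<And>k. k < K \<Longrightarrow> sets (\<pi> k) = sets Ms"
    and user_kernel: "\<And>k. k < K \<Longrightarrow> \<kappa> k \<in> measurable (PiM {..<n k} (\<lambda>_. Ms)) (prob_algebra Mw)"
    and fusion_kernel: "\<phi> \<in> measurable (PiM {..<K} (\<lambda>_. Mw)) (prob_algebra Mw)"
begin

abbreviation "SI \<equiv> sample_index K n"
abbreviation "DS \<equiv> PiM SI (\<lambda>_. Ms)"

lemma SI_fst: "ki \<in> SI \<Longrightarrow> fst ki < K"
  by (auto simp: sample_index_def)

lemma sets_data_law: "sets (data_law K n \<pi>) = sets DS"
  unfolding data_law_def by (rule sets_PiM_cong) (auto simp: SI_fst pi_sets)

lemma space_data_law: "space (data_law K n \<pi>) = space DS"
  using sets_data_law by (rule sets_eq_imp_space_eq)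

lemma prob_data_law: "prob_space (data_law K n \<pi>)"
  unfolding data_law_def by (rule prob_space_PiM) (auto simp: SI_fst pi_prob)

lemma data_law_in: "data_law K n \<pi> \<in> space (prob_algebra DS)"
  using prob_data_law sets_data_law by (simp add: space_prob_algebra)

lemma user_data_meas: "k < K \<Longrightarrow> (\<lambda>d. user_data n d k) \<in> DS \<rightarrow>\<^sub>M PiM {..<n k} (\<lambda>_. Ms)"
  unfolding user_data_def
  by (intro measurable_restrict measurable_component_singleton) (auto simp: sample_index_def)

lemma kappa_d_meas: "k < K \<Longrightarrow> (\<lambda>d. \<kappa> k (user_data n d k)) \<in> DS \<rightarrow>\<^sub>M prob_algebra Mw"
  using measurable_comp[OF user_data_meas user_kernel] by (simp add: comp_def)

lemma kappa_d_space: "k < K \<Longrightarrow> d \<in> space DS \<Longrightarrow> sets (\<kappa> k (user_data n d k)) = sets Mw \<and> prob_space (\<kappa> k (user_data n d k))"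
  using measurable_space[OF kappa_d_meas] by (auto simp: space_prob_algebra)

lemma users_law_meas: "(\<lambda>d. users_law K n \<kappa> d) \<in> DS \<rightarrow>\<^sub>M prob_algebra (PiM {..<K} (\<lambda>_. Mw))"
proof (rule measurable_prob_algebra_generated[OF sets_PiM Int_stable_prod_algebra prod_algebra_sets_into_space])
  fix d assume d: "d \<in> space DS"
  show "prob_space (users_law K n \<kappa> d)"
    unfolding users_law_def by (rule prob_space_PiM) (use kappa_d_space[OF _ d] in auto)
  show "sets (users_law K n \<kappa> d) = sets (PiM {..<K} (\<lambda>_. Mw))"
    unfolding users_law_def by (rule sets_PiM_cong) (use kappa_d_space[OF _ d] in auto)
next
  fix A assume "A \<in> prod_algebra {..<K} (\<lambda>_. Mw)"
  then obtain J E where A: "A = prod_emb {..<K} (\<lambda>_. Mw) J (\<Pi>\<^sub>E j\<in>J. E j)"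
    and J: "finite J" "J \<subseteq> {..<K}" and E: "\<And>i. i \<in> J \<Longrightarrow> E i \<in> sets Mw"
    by (rule prod_algebraE) auto
  have eq: "emeasure (users_law K n \<kappa> d) A = (\<Prod>j\<in>J. emeasure (\<kappa> j (user_data n d j)) (E j))"
    if d: "d \<in> space DS" for d
  proof -
    have sp: "space (\<kappa> k (user_data n d k)) = space Mw" if "k \<in> {..<K}" for k
      using kappa_d_space[OF _ d] that by (metis lessThan_iff sets_eq_imp_space_eq)
    have "A = prod_emb {..<K} (\<lambda>k. \<kappa> k (user_data n d k)) J (\<Pi>\<^sub>E j\<in>J. E j)"
      unfolding A prod_emb_def using sp by (auto simp: PiE_iff)
    then show ?thesis
      unfolding users_law_def
      using J E kappa_d_space[OF _ d]
      by (simp only:) (rule emeasure_PiM_emb, auto)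
  qed
  show "(\<lambda>d. emeasure (users_law K n \<kappa> d) A) \<in> borel_measurable DS"
  proof (rule measurable_cong[THEN iffD2])
    show "d \<in> space DS \<Longrightarrow> emeasure (users_law K n \<kappa> d) A = (\<Prod>j\<in>J. emeasure (\<kappa> j (user_data n d j)) (E j))" for d
      using eq by simp
    show "(\<lambda>d. \<Prod>j\<in>J. emeasure (\<kappa> j (user_data n d j)) (E j)) \<in> borel_measurable DS"
    proof (rule borel_measurable_prod_ennreal)
      fix j assume j: "j \<in> J"
      then have "j < K" using J by auto
      show "(\<lambda>d. emeasure (\<kappa> j (user_data n d j)) (E j)) \<in> borel_measurable DS"
        using measurable_comp[OF measurable_prob_algebraD[OF kappa_d_meas[OF \<open>j < K\<close>]]
            measurable_emeasure_subprob_algebra[OF E[OF j]]]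
        by (simp add: comp_def)
    qed
  qed
qed

definition "kern d = distr (bind (users_law K n \<kappa> d) \<phi>) (DS \<Otimes>\<^sub>M Mw) (\<lambda>w. (d, w))"

lemma fused_meas: "(\<lambda>d. bind (users_law K n \<kappa> d) \<phi>) \<in> DS \<rightarrow>\<^sub>M prob_algebra Mw"
  by (rule measurable_bind_prob_space[OF users_law_meas fusion_kernel])

lemma kern_meas: "kern \<in> DS \<rightarrow>\<^sub>M prob_algebra (DS \<Otimes>\<^sub>M Mw)"
  unfolding kern_def[abs_def]
  by (rule measurable_distr_prob_space2[OF fused_meas]) simp

lemma J_eq: "joint_law Ms Mw K n \<pi> \<kappa> \<phi> = bind (data_law K n \<pi>) kern"
  unfolding joint_law_def kern_def ..

lemma kern_meas': "kern \<in> data_law K n \<pi> \<rightarrow>\<^sub>M prob_algebra (DS \<Otimes>\<^sub>M Mw)"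
  using kern_meas measurable_cong_sets[OF sets_data_law refl] by blast

lemma prob_J: "prob_space (joint_law Ms Mw K n \<pi> \<kappa> \<phi>)"
  unfolding J_eq using prob_space_bind'[OF data_law_in kern_meas] .

lemma sets_J: "sets (joint_law Ms Mw K n \<pi> \<kappa> \<phi>) = sets (DS \<Otimes>\<^sub>M Mw)"
  unfolding J_eq using sets_bind'[OF data_law_in kern_meas] .

lemma fst_J: "distr (joint_law Ms Mw K n \<pi> \<kappa> \<phi>) DS fst = data_law K n \<pi>"
proof -
  have ne: "space (data_law K n \<pi>) \<noteq> {}"
    using prob_space.not_empty[OF prob_data_law] .
  have "distr (joint_law Ms Mw K n \<pi> \<kappa> \<phi>) DS fst = bind (data_law K n \<pi>) (\<lambda>d. distr (kern d) DS fst)"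
    unfolding J_eq by (rule distr_bind[OF measurable_prob_algebraD[OF kern_meas'] ne]) simp
  also have "\<dots> = bind (data_law K n \<pi>) (return DS)"
  proof (rule bind_cong[OF refl])
    fix d assume d: "d \<in> space (data_law K n \<pi>)"
    then have d': "d \<in> space DS" using space_data_law by simp
    have ps: "prob_space (bind (users_law K n \<kappa> d) \<phi>)"
      using measurable_space[OF fused_meas d'] by (simp add: space_prob_algebra)
    have sb: "sets (bind (users_law K n \<kappa> d) \<phi>) = sets Mw"
      using measurable_space[OF fused_meas d'] by (simp add: space_prob_algebra)
    have mp: "(\<lambda>w. (d, w)) \<in> bind (users_law K n \<kappa> d) \<phi> \<rightarrow>\<^sub>M DS \<Otimes>\<^sub>M Mw"
      by (rule measurable_Pair) (auto intro: measurable_ident_sets[OF sb] simp: d')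
    have "distr (kern d) DS fst = distr (bind (users_law K n \<kappa> d) \<phi>) DS (\<lambda>w. d)"
      unfolding kern_def
      by (subst distr_distr[OF _ mp]) (auto simp: comp_def d')
    also have "\<dots> = return DS d"
      using prob_space.distr_const[OF ps d'] .
    finally show "distr (kern d) DS fst = return DS d" .
  qed
  also have "\<dots> = data_law K n \<pi>"
    by (rule bind_return''[OF sets_data_law])
  finally show ?thesis .
qed

lemma marg_J: assumes ki: "ki \<in> SI"
  shows "distr (joint_law Ms Mw K n \<pi> \<kappa> \<phi>) Ms (\<lambda>dw. fst dw ki) = \<pi> (fst ki)"
proof -
  have m: "fst \<in> joint_law Ms Mw K n \<pi> \<kappa> \<phi> \<rightarrow>\<^sub>M DS"
    using measurable_cong_sets[OF sets_J refl] by auto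
  have "distr (joint_law Ms Mw K n \<pi> \<kappa> \<phi>) Ms (\<lambda>dw. fst dw ki)
     = distr (distr (joint_law Ms Mw K n \<pi> \<kappa> \<phi>) DS fst) Ms (\<lambda>d. d ki)"
    by (subst distr_distr[OF _ m]) (auto simp: comp_def ki)
  also have "\<dots> = distr (data_law K n \<pi>) (\<pi> (fst ki)) (\<lambda>d. d ki)"
    unfolding fst_J by (rule distr_cong) (auto simp: pi_sets SI_fst ki)
  also have "\<dots> = \<pi> (fst ki)"
    unfolding data_law_def by (rule distr_PiM_component) (auto simp: pi_prob SI_fst ki)
  finally show ?thesis .
qed

end

lemma ed_eq: "entropy_density (exp 1) P Q = (\<lambda>x. ln (enn2real (RN_deriv P Q x)))"
  by (auto simp: entropy_density_def log_def)

lemma DV: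
  fixes P Q :: "'a measure" and f :: "'a \<Rightarrow> real"
  assumes P: "prob_space P" and Q: "prob_space Q" and sQ: "sets Q = sets P"
    and ac: "absolutely_continuous P Q"
    and kl: "integrable Q (entropy_density (exp 1) P Q)"
    and fm[measurable]: "f \<in> borel_measurable P" and fQ: "integrable Q f"
    and fP: "integrable P (\<lambda>x. exp (f x))"
  shows "(\<integral>x. f x \<partial>Q) \<le> KL_divergence (exp 1) P Q + ln (\<integral>x. exp (f x) \<partial>P)"
proof -
  interpret P: prob_space P by fact
  interpret Q: prob_space Q by fact
  define r where "r = RN_deriv P Q"
  have rm[measurable]: "r \<in> borel_measurable P" unfolding r_def by simp
  have Qd: "density P r = Q" unfolding r_def by (rule P.density_RN_deriv[OF ac sQ])
  have fin: "AE x in P. r x \<noteq> \<infinity>" unfolding r_def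
    by (rule P.RN_deriv_finite[OF _ ac sQ]) (rule Q.sigma_finite_measure_axioms)
  define \<rho> where "\<rho> x = enn2real (r x)" for x
  have \<rho>m[measurable]: "\<rho> \<in> borel_measurable P" unfolding \<rho>_def by simp
  define Z where "Z = (\<integral>x. exp (f x) \<partial>P)"
  have "Z \<noteq> 0"
  proof
    assume "Z = 0"
    then have "AE x in P. exp (f x) = 0"
      unfolding Z_def using fP by (subst (asm) integral_nonneg_eq_0_iff_AE) auto
    then show False by simp
  qed
  moreover have "0 \<le> Z" unfolding Z_def by simp
  ultimately have Zpos: "0 < Z" by simp
  have AEQ: "AE x in Q. 0 < r x \<and> r x \<noteq> \<infinity>"
    unfolding Qd[symmetric] using fin by (subst AE_density) auto
  then have AEQ': "AE x in Q. 0 < \<rho> x \<and> r x = ennreal (\<rho> x)"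
    by eventually_elim (auto simp: \<rho>_def enn2real_positive_iff less_top)
  define h where "h x = exp (f x) / (Z * \<rho> x)" for x
  have hm[measurable]: "h \<in> borel_measurable P" unfolding h_def by simp
  have hmQ: "h \<in> borel_measurable Q" using hm measurable_cong_sets[OF sQ refl] by blast
  have "(\<integral>\<^sup>+x. ennreal (h x) \<partial>Q) = (\<integral>\<^sup>+x. r x * ennreal (h x) \<partial>P)"
    unfolding Qd[symmetric] by (subst nn_integral_density) auto
  also have "\<dots> \<le> (\<integral>\<^sup>+x. ennreal (exp (f x) / Z) \<partial>P)"
  proof (rule nn_integral_mono_AE)
    show "AE x in P. r x * ennreal (h x) \<le> ennreal (exp (f x) / Z)"
      using fin
    proof eventually_elim
      case (elim x)
      show ?case
      proof (cases "r x = 0")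
        case True then show ?thesis by simp
      next
        case False
        then have "0 < \<rho> x" "r x = ennreal (\<rho> x)"
          using elim by (auto simp: \<rho>_def enn2real_positive_iff less_top zero_less_iff_neq_zero)
        then show ?thesis
          using Zpos by (simp add: h_def ennreal_mult''[symmetric])
      qed
    qed
  qed
  also have "\<dots> = ennreal (\<integral>x. exp (f x) / Z \<partial>P)"
    using fP Zpos by (intro nn_integral_eq_integral) auto
  also have "(\<integral>x. exp (f x) / Z \<partial>P) = 1"
    using Zpos by (simp add: Z_def)
  finally have hnn: "(\<integral>\<^sup>+x. ennreal (h x) \<partial>Q) \<le> 1" by simp
  have hnonneg: "AE x in Q. 0 \<le> h x"
    using AEQ' by eventually_elim (insert Zpos, auto simp: h_def)
  have hint: "integrable Q h"
    using hnn hnonneg hmQ by (intro integrableI_nonneg) (auto simp: top_unique intro: le_less_trans[OF hnn])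
  have "ennreal (\<integral>x. h x \<partial>Q) = (\<integral>\<^sup>+x. ennreal (h x) \<partial>Q)"
    using hint hnonneg by (intro nn_integral_eq_integral[symmetric])
  with hnn have hle: "(\<integral>x. h x \<partial>Q) \<le> 1" by (metis ennreal_le_1)
  have lnint: "integrable Q (\<lambda>x. ln (\<rho> x))"
    using kl by (simp add: ed_eq \<rho>_def r_def)
  have KL: "KL_divergence (exp 1) P Q = (\<integral>x. ln (\<rho> x) \<partial>Q)"
    by (simp add: KL_divergence_def ed_eq \<rho>_def r_def)
  have "(\<integral>x. f x - ln Z - ln (\<rho> x) \<partial>Q) \<le> (\<integral>x. h x - 1 \<partial>Q)"
  proof (rule integral_mono_AE)
    show "integrable Q (\<lambda>x. f x - ln Z - ln (\<rho> x))" using fQ lnint by auto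
    show "integrable Q (\<lambda>x. h x - 1)" using hint by auto
    show "AE x in Q. f x - ln Z - ln (\<rho> x) \<le> h x - 1"
      using AEQ'
    proof eventually_elim
      case (elim x)
      have "h x = exp (f x - ln Z - ln (\<rho> x))"
        using elim Zpos by (simp add: h_def exp_diff)
      then show ?case using exp_ge_add_one_self[of "f x - ln Z - ln (\<rho> x)"] by linarith
    qed
  qed
  also have "\<dots> = (\<integral>x. h x \<partial>Q) - 1" using hint by (simp add: Q.prob_space)
  finally have "(\<integral>x. f x \<partial>Q) - ln Z - (\<integral>x. ln (\<rho> x) \<partial>Q) \<le> (\<integral>x. h x \<partial>Q) - 1"
    using fQ lnint by (simp add: Q.prob_space)
  then show ?thesis using hle KL by (simp add: Z_def)
qed

lemma inv_lower:
  assumes psi: "\<And>t. t \<in> dom_b b \<Longrightarrow> 0 \<le> \<psi> t"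
    and D: "\<And>t. t \<in> dom_b b \<Longrightarrow> t * \<Delta> - \<psi> t \<le> I" and I: "0 \<le> I"
  shows "ereal \<Delta> \<le> legendre_dual_inv \<psi> b (ereal I)"
proof -
  have "legendre_dual \<psi> b (max \<Delta> 0) \<le> ereal I"
    unfolding legendre_dual_def
  proof (rule SUP_least)
    fix t assume t: "t \<in> dom_b b"
    show "ereal (t * max \<Delta> 0 - \<psi> t) \<le> ereal I"
      using psi[OF t] D[OF t] I by (cases "0 \<le> \<Delta>") (auto simp: max_def)
  qed
  then have "ereal (max \<Delta> 0) \<le> legendre_dual_inv \<psi> b (ereal I)"
    unfolding legendre_dual_inv_def by (intro SUP_upper) auto
  then show ?thesis by (rule order_trans[rotated]) auto
qed

lemma inv_infty: "ereal \<Delta> \<le> legendre_dual_inv \<psi> b \<infinity>"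
proof -
  have "ereal (max \<Delta> 0) \<le> legendre_dual_inv \<psi> b \<infinity>"
    unfolding legendre_dual_inv_def by (intro SUP_upper) auto
  then show ?thesis by (rule order_trans[rotated]) auto
qed

lemma cgf_nonneg:
  assumes P: "prob_space P" and g: "integrable P g"
    and e: "integrable P (\<lambda>x. exp (t * (g x - (\<integral>y. g y \<partial>P))))"
  shows "0 \<le> cgf P g t"
proof -
  interpret prob_space P by fact
  let ?c = "\<integral>y. g y \<partial>P"
  have "(\<integral>x. 1 + t * (g x - ?c) \<partial>P) \<le> (\<integral>x. exp (t * (g x - ?c)) \<partial>P)"
    by (rule integral_mono) (use g e in \<open>auto simp: exp_ge_add_one_self\<close>)
  moreover have "(\<integral>x. 1 + t * (g x - ?c) \<partial>P) = 1"
    using g by (simp add: prob_space algebra_simps)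
  ultimately show ?thesis unfolding cgf_def by simp
qed

lemma pair_bound:
  fixes J :: "'a measure" and X :: "'a \<Rightarrow> 's" and Y :: "'a \<Rightarrow> 'w"
    and loss :: "'s \<Rightarrow> 'w \<Rightarrow> real"
  assumes J: "prob_space J" and Xm[measurable]: "X \<in> J \<rightarrow>\<^sub>M Ms" and Ym[measurable]: "Y \<in> J \<rightarrow>\<^sub>M Mw"
    and marg: "distr J Ms X = pk" and PW: "PW = distr J Mw Y"
    and loss_meas[measurable]: "(\<lambda>sw. loss (fst sw) (snd sw)) \<in> borel_measurable (Ms \<Otimes>\<^sub>M Mw)"
    and loss_int: "integrable (pk \<Otimes>\<^sub>M PW) (\<lambda>sw. loss (fst sw) (snd sw))"
    and cgf_p: "\<And>t. t \<in> dom_b bp \<Longrightarrow>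
        integrable (pk \<Otimes>\<^sub>M PW)
          (\<lambda>sw. exp (t * (loss (fst sw) (snd sw) - (\<integral>y. loss (fst y) (snd y) \<partial>(pk \<Otimes>\<^sub>M PW))))) \<and>
        cgf (pk \<Otimes>\<^sub>M PW) (\<lambda>sw. loss (fst sw) (snd sw)) t \<le> \<psi>p t"
    and cgf_m: "\<And>t. - t \<in> dom_b bm \<Longrightarrow>
        integrable (pk \<Otimes>\<^sub>M PW)
          (\<lambda>sw. exp (t * (loss (fst sw) (snd sw) - (\<integral>y. loss (fst y) (snd y) \<partial>(pk \<Otimes>\<^sub>M PW))))) \<and>
        cgf (pk \<Otimes>\<^sub>M PW) (\<lambda>sw. loss (fst sw) (snd sw)) t \<le> \<psi>m (- t)"
  shows "0 \<le> legendre_dual_inv \<psi>p bp (mutual_info J Ms Mw X Y)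
     \<and> 0 \<le> legendre_dual_inv \<psi>m bm (mutual_info J Ms Mw X Y)
     \<and> (integrable J (\<lambda>x. loss (X x) (Y x)) \<longrightarrow>
         ereal ((\<integral>x. loss (X x) (Y x) \<partial>J) - (\<integral>y. loss (fst y) (snd y) \<partial>(pk \<Otimes>\<^sub>M PW)))
            \<le> legendre_dual_inv \<psi>p bp (mutual_info J Ms Mw X Y)
       \<and> ereal ((\<integral>y. loss (fst y) (snd y) \<partial>(pk \<Otimes>\<^sub>M PW)) - (\<integral>x. loss (X x) (Y x) \<partial>J))
            \<le> legendre_dual_inv \<psi>m bm (mutual_info J Ms Mw X Y))"
proof -
  interpret J: prob_space J by fact
  define P where "P = distr J Ms X \<Otimes>\<^sub>M distr J Mw Y"
  define Q where "Q = distr J (Ms \<Otimes>\<^sub>M Mw) (\<lambda>x. (X x, Y x))"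
  define L where "L = (\<lambda>sw. loss (fst sw) (snd sw))"
  define c where "c = (\<integral>y. L y \<partial>P)"
  have PP: "P = pk \<Otimes>\<^sub>M PW" unfolding P_def marg PW ..
  have probP: "prob_space P" unfolding P_def
    by (intro prob_space_pair J.prob_space_distr) auto
  have probQ: "prob_space Q" unfolding Q_def
    by (intro J.prob_space_distr) auto
  have sP: "sets P = sets (Ms \<Otimes>\<^sub>M Mw)" unfolding P_def
    by (rule sets_pair_measure_cong) auto
  have sQ: "sets Q = sets P" unfolding Q_def using sP by simp
  have LP[measurable]: "L \<in> borel_measurable P"
    unfolding L_def using measurable_cong_sets[OF sP refl] loss_meas by blast
  have LintP: "integrable P L" unfolding PP L_def by (rule loss_int)
  have mi_def': "mutual_info J Ms Mw X Y =
     (if absolutely_continuous P Q \<and> integrable Q (entropy_density (exp 1) P Q)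
      then ereal (KL_divergence (exp 1) P Q) else \<infinity>)"
    unfolding mutual_info_def prob_space.mutual_information_def[OF J] P_def Q_def Let_def ..
  show ?thesis
  proof (cases "absolutely_continuous P Q \<and> integrable Q (entropy_density (exp 1) P Q)")
    case False
    then have mi: "mutual_info J Ms Mw X Y = \<infinity>" unfolding mi_def' by (simp only: if_False)
    show ?thesis unfolding mi zero_ereal_def[symmetric] using inv_infty by (metis zero_ereal_def)
  next
    case True
    then have ac: "absolutely_continuous P Q" and kl: "integrable Q (entropy_density (exp 1) P Q)" by auto
    have DVf: "(\<integral>x. f x \<partial>Q) \<le> KL_divergence (exp 1) P Q + ln (\<integral>x. exp (f x) \<partial>P)"
      if "f \<in> borel_measurable P" "integrable Q f" "integrable P (\<lambda>x. exp (f x))" for f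
      by (rule DV[OF probP probQ sQ ac kl that])
    interpret Pp: prob_space P by (rule probP)
    interpret Qp: prob_space Q by (rule probQ)
    have KLnn: "0 \<le> KL_divergence (exp 1) P Q"
    proof -
      have "(\<integral>x. (\<lambda>_. 0::real) x \<partial>Q) \<le> KL_divergence (exp 1) P Q + ln (\<integral>x. exp ((\<lambda>_. 0::real) x) \<partial>P)"
        by (rule DVf) auto
      then show ?thesis by (simp add: Pp.prob_space)
    qed
    have mi: "mutual_info J Ms Mw X Y = ereal (KL_divergence (exp 1) P Q)"
      unfolding mi_def' using True by simp
    have psip: "0 \<le> \<psi>p t" if t: "t \<in> dom_b bp" for t
      using cgf_nonneg[OF probP LintP, of t] cgf_p[OF t] unfolding PP L_def by auto
    have psim: "0 \<le> \<psi>m t" if t: "t \<in> dom_b bm" for t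
      using cgf_nonneg[OF probP LintP, of "-t"] cgf_m[of "-t"] t unfolding PP L_def by auto
    have zero: "0 \<le> legendre_dual_inv \<psi>p bp (mutual_info J Ms Mw X Y)
       \<and> 0 \<le> legendre_dual_inv \<psi>m bm (mutual_info J Ms Mw X Y)"
    proof -
      have a: "ereal 0 \<le> legendre_dual_inv \<psi>p bp (ereal (KL_divergence (exp 1) P Q))"
      proof (rule inv_lower[OF psip _ KLnn])
        fix t assume "t \<in> dom_b bp"
        then show "t * 0 - \<psi>p t \<le> KL_divergence (exp 1) P Q" using psip[of t] KLnn by simp
      qed
      have b: "ereal 0 \<le> legendre_dual_inv \<psi>m bm (ereal (KL_divergence (exp 1) P Q))"
      proof (rule inv_lower[OF psim _ KLnn])
        fix t assume "t \<in> dom_b bm"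
        then show "t * 0 - \<psi>m t \<le> KL_divergence (exp 1) P Q" using psim[of t] KLnn by simp
      qed
      show ?thesis unfolding mi using a b by (simp only: zero_ereal_def)
    qed
    have main: "ereal ((\<integral>x. loss (X x) (Y x) \<partial>J) - (\<integral>y. loss (fst y) (snd y) \<partial>(pk \<Otimes>\<^sub>M PW)))
            \<le> legendre_dual_inv \<psi>p bp (mutual_info J Ms Mw X Y)
       \<and> ereal ((\<integral>y. loss (fst y) (snd y) \<partial>(pk \<Otimes>\<^sub>M PW)) - (\<integral>x. loss (X x) (Y x) \<partial>J))
            \<le> legendre_dual_inv \<psi>m bm (mutual_info J Ms Mw X Y)"
      if int: "integrable J (\<lambda>x. loss (X x) (Y x))"
    proof -
      have LQ: "integrable Q L" unfolding Q_def L_def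
        by (subst integrable_distr_eq) (use int in auto)
      have EQ: "(\<integral>x. L x \<partial>Q) = (\<integral>x. loss (X x) (Y x) \<partial>J)" unfolding Q_def L_def
        by (subst integral_distr) auto
      have cc: "(\<integral>y. loss (fst y) (snd y) \<partial>(pk \<Otimes>\<^sub>M PW)) = c"
        unfolding c_def PP L_def ..
      have "ereal ((\<integral>x. L x \<partial>Q) - c) \<le> legendre_dual_inv \<psi>p bp (mutual_info J Ms Mw X Y)"
        unfolding mi
      proof (rule inv_lower[OF psip _ KLnn])
        fix t assume t: "t \<in> dom_b bp"
        have ip: "integrable P (\<lambda>x. exp (t * (L x - c)))" and
          cg: "cgf P L t \<le> \<psi>p t" using cgf_p[OF t] unfolding PP L_def c_def by auto
        have "(\<integral>x. t * (L x - c) \<partial>Q) \<le> KL_divergence (exp 1) P Q + ln (\<integral>x. exp (t * (L x - c)) \<partial>P)"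
          by (rule DVf) (use ip LQ in auto)
        moreover have "(\<integral>x. t * (L x - c) \<partial>Q) = t * ((\<integral>x. L x \<partial>Q) - c)"
          using LQ probQ by (simp add: prob_space.prob_space algebra_simps)
        moreover have "ln (\<integral>x. exp (t * (L x - c)) \<partial>P) = cgf P L t"
          unfolding cgf_def c_def ..
        ultimately show "t * ((\<integral>x. L x \<partial>Q) - c) - \<psi>p t \<le> KL_divergence (exp 1) P Q"
          using cg by linarith
      qed
      moreover have "ereal (c - (\<integral>x. L x \<partial>Q)) \<le> legendre_dual_inv \<psi>m bm (mutual_info J Ms Mw X Y)"
        unfolding mi
      proof (rule inv_lower[OF psim _ KLnn])
        fix t assume t: "t \<in> dom_b bm"
        have ip: "integrable P (\<lambda>x. exp ((- t) * (L x - c)))" and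
          cg: "cgf P L (- t) \<le> \<psi>m t" using cgf_m[of "-t"] t unfolding PP L_def c_def by auto
        have "(\<integral>x. (- t) * (L x - c) \<partial>Q) \<le> KL_divergence (exp 1) P Q + ln (\<integral>x. exp ((- t) * (L x - c)) \<partial>P)"
          by (rule DVf) (use ip LQ in auto)
        moreover have "(\<integral>x. (- t) * (L x - c) \<partial>Q) = t * (c - (\<integral>x. L x \<partial>Q))"
          using LQ probQ by (simp add: prob_space.prob_space algebra_simps)
        moreover have "ln (\<integral>x. exp ((- t) * (L x - c)) \<partial>P) = cgf P L (- t)"
          unfolding cgf_def c_def ..
        ultimately show "t * (c - (\<integral>x. L x \<partial>Q)) - \<psi>m t \<le> KL_divergence (exp 1) P Q"
          using cg by linarith
      qed
      ultimately show ?thesis unfolding EQ cc by (rule conjI)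
    qed
    show ?thesis using zero main by blast
  qed
qed

lemma final_assembly:
  fixes D :: "nat \<Rightarrow> nat \<Rightarrow> real" and Ip Im :: "nat \<Rightarrow> nat \<Rightarrow> ereal" and c :: real and g :: real
  assumes c: "0 \<le> c" and g: "g = c * (\<Sum>k<K. \<Sum>i<n k. D k i)"
    and bp: "\<And>k i. k < K \<Longrightarrow> i < n k \<Longrightarrow> ereal (- D k i) \<le> Ip k i"
    and bm: "\<And>k i. k < K \<Longrightarrow> i < n k \<Longrightarrow> ereal (D k i) \<le> Im k i"
  shows "- (ereal c * (\<Sum>k<K. \<Sum>i<n k. Ip k i)) \<le> ereal g
       \<and> ereal g \<le> ereal c * (\<Sum>k<K. \<Sum>i<n k. Im k i)"
proof
  have "(\<Sum>k<K. \<Sum>i<n k. ereal (- D k i)) \<le> (\<Sum>k<K. \<Sum>i<n k. Ip k i)"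
    by (intro sum_mono) (auto intro: bp)
  then have "ereal c * (\<Sum>k<K. \<Sum>i<n k. ereal (- D k i)) \<le> ereal c * (\<Sum>k<K. \<Sum>i<n k. Ip k i)"
    by (rule ereal_mult_left_mono) (use c in simp)
  moreover have "ereal c * (\<Sum>k<K. \<Sum>i<n k. ereal (- D k i)) = - ereal g"
    unfolding g by (simp add: sum_negf)
  ultimately show "- (ereal c * (\<Sum>k<K. \<Sum>i<n k. Ip k i)) \<le> ereal g"
    by (metis ereal_uminus_le_reorder)
next
  have "(\<Sum>k<K. \<Sum>i<n k. ereal (D k i)) \<le> (\<Sum>k<K. \<Sum>i<n k. Im k i)"
    by (intro sum_mono) (auto intro: bm)
  then have "ereal c * (\<Sum>k<K. \<Sum>i<n k. ereal (D k i)) \<le> ereal c * (\<Sum>k<K. \<Sum>i<n k. Im k i)"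
    by (rule ereal_mult_left_mono) (use c in simp)
  moreover have "ereal c * (\<Sum>k<K. \<Sum>i<n k. ereal (D k i)) = ereal g"
    unfolding g by simp
  ultimately show "ereal g \<le> ereal c * (\<Sum>k<K. \<Sum>i<n k. Im k i)" by simp
qed

lemma G_eq:
  assumes npos: "\<And>k. k < K \<Longrightarrow> 1 \<le> n k"
  shows "dist_pop_risk loss K n \<pi> w - dist_emp_risk loss K n d w =
    (\<Sum>k<K. \<Sum>i<n k. (1 / real (\<Sum>j<K. n j)) * (pop_risk loss (\<pi> k) w - loss (d (k, i)) w))"
proof -
  have "(\<Sum>k<K. \<Sum>i<n k. (1 / real (\<Sum>j<K. n j)) * (pop_risk loss (\<pi> k) w - loss (d (k, i)) w))
    = (\<Sum>k<K. (real (n k) / real (\<Sum>j<K. n j)) * pop_risk loss (\<pi> k) w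
         - (real (n k) / real (\<Sum>j<K. n j)) * emp_risk loss n d k w)"
  proof (rule sum.cong[OF refl])
    fix k assume "k \<in> {..<K}"
    then have nk: "real (n k) \<noteq> 0" using npos[of k] by auto
    show "(\<Sum>i<n k. (1 / real (\<Sum>j<K. n j)) * (pop_risk loss (\<pi> k) w - loss (d (k, i)) w))
      = (real (n k) / real (\<Sum>j<K. n j)) * pop_risk loss (\<pi> k) w
         - (real (n k) / real (\<Sum>j<K. n j)) * emp_risk loss n d k w"
    proof -
      let ?N = "real (\<Sum>j<K. n j)" and ?p = "pop_risk loss (\<pi> k) w" and ?S = "\<Sum>i<n k. loss (d (k, i)) w"
      have "(\<Sum>i<n k. (1 / ?N) * (?p - loss (d (k, i)) w)) = (1 / ?N) * (real (n k) * ?p - ?S)"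
        by (simp add: sum_divide_distrib[symmetric] sum_subtractf)
      moreover have "(real (n k) / ?N) * emp_risk loss n d k w = (1 / ?N) * ?S"
        unfolding emp_risk_def using nk by simp
      moreover have "(1 / ?N) * (real (n k) * ?p - ?S) = (real (n k) / ?N) * ?p - (1 / ?N) * ?S"
        by (simp add: right_diff_distrib)
      ultimately show ?thesis by linarith
    qed
  qed
  then show ?thesis
    unfolding dist_pop_risk_def dist_emp_risk_def by (simp add: sum_subtractf)
qed

theorem theorem2:
  fixes Ms :: "'s measure" and Mw :: "'w measure"
    and loss :: "'s \<Rightarrow> 'w \<Rightarrow> real"
    and K :: nat and n :: "nat \<Rightarrow> nat"
    and \<pi> :: "nat \<Rightarrow> 's measure"
    and \<kappa> :: "nat \<Rightarrow> (nat \<Rightarrow> 's) \<Rightarrow> 'w measure"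
    and \<phi> :: "(nat \<Rightarrow> 'w) \<Rightarrow> 'w measure"
    and \<psi>p \<psi>m :: "nat \<Rightarrow> real \<Rightarrow> real" and bp bm :: "nat \<Rightarrow> ereal"
  defines "J \<equiv> joint_law Ms Mw K n \<pi> \<kappa> \<phi>"
  defines "PW \<equiv> distr J Mw snd"
  assumes K_pos: "1 \<le> K"
    and n_pos: "\<And>k. k < K \<Longrightarrow> 1 \<le> n k"
    and loss_meas: "(\<lambda>sw. loss (fst sw) (snd sw)) \<in> borel_measurable (Ms \<Otimes>\<^sub>M Mw)"
    and loss_nonneg: "\<And>s w. s \<in> space Ms \<Longrightarrow> w \<in> space Mw \<Longrightarrow> 0 \<le> loss s w"
    and pi_prob: "\<And>k. k < K \<Longrightarrow> prob_space (\<pi> k)"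
    and pi_sets: "\<And>k. k < K \<Longrightarrow> sets (\<pi> k) = sets Ms"
    and user_kernel: "\<And>k. k < K \<Longrightarrow> \<kappa> k \<in> measurable (PiM {..<n k} (\<lambda>_. Ms)) (prob_algebra Mw)"
    and fusion_kernel: "\<phi> \<in> measurable (PiM {..<K} (\<lambda>_. Mw)) (prob_algebra Mw)"
    and loss_int: "\<And>k. k < K \<Longrightarrow> integrable (\<pi> k \<Otimes>\<^sub>M PW) (\<lambda>sw. loss (fst sw) (snd sw))"
    and psi_p: "\<And>k. k < K \<Longrightarrow> admissible_psi (\<psi>p k) (bp k)"
    and psi_m: "\<And>k. k < K \<Longrightarrow> admissible_psi (\<psi>m k) (bm k)"
    and cgf_p: "\<And>k t. k < K \<Longrightarrow> t \<in> dom_b (bp k) \<Longrightarrow>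
        integrable (\<pi> k \<Otimes>\<^sub>M PW)
          (\<lambda>sw. exp (t * (loss (fst sw) (snd sw) - (\<integral>y. loss (fst y) (snd y) \<partial>(\<pi> k \<Otimes>\<^sub>M PW))))) \<and>
        cgf (\<pi> k \<Otimes>\<^sub>M PW) (\<lambda>sw. loss (fst sw) (snd sw)) t \<le> \<psi>p k t"
    and cgf_m: "\<And>k t. k < K \<Longrightarrow> - t \<in> dom_b (bm k) \<Longrightarrow>
        integrable (\<pi> k \<Otimes>\<^sub>M PW)
          (\<lambda>sw. exp (t * (loss (fst sw) (snd sw) - (\<integral>y. loss (fst y) (snd y) \<partial>(\<pi> k \<Otimes>\<^sub>M PW))))) \<and>
        cgf (\<pi> k \<Otimes>\<^sub>M PW) (\<lambda>sw. loss (fst sw) (snd sw)) t \<le> \<psi>m k (- t)"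
  shows "- (ereal (1 / real (\<Sum>k<K. n k)) *
            (\<Sum>k<K. \<Sum>i<n k. legendre_dual_inv (\<psi>p k) (bp k)
               (mutual_info J Ms Mw (\<lambda>dw. fst dw (k, i)) snd)))
           \<le> ereal (gen_error Ms Mw loss K n \<pi> \<kappa> \<phi>)
       \<and> ereal (gen_error Ms Mw loss K n \<pi> \<kappa> \<phi>)
           \<le> ereal (1 / real (\<Sum>k<K. n k)) *
            (\<Sum>k<K. \<Sum>i<n k. legendre_dual_inv (\<psi>m k) (bm k)
               (mutual_info J Ms Mw (\<lambda>dw. fst dw (k, i)) snd))"
proof -
  interpret D: dl Ms Mw K n \<pi> \<kappa> \<phi>
    by (rule dl.intro) (fact pi_prob, fact pi_sets, fact user_kernel, fact fusion_kernel)
  define N where "N = real (\<Sum>k<K. n k)"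
  have Npos: "0 < N"
  proof -
    have "n 0 \<le> (\<Sum>k<K. n k)" using K_pos by (intro member_le_sum) auto
    then show ?thesis using n_pos[of 0] K_pos unfolding N_def by linarith
  qed
  have Jp: "prob_space J" unfolding J_def by (rule D.prob_J)
  interpret Jp: prob_space J by (rule Jp)
  have sJ: "sets J = sets (PiM (sample_index K n) (\<lambda>_. Ms) \<Otimes>\<^sub>M Mw)" unfolding J_def by (rule D.sets_J)
  have Ym[measurable]: "snd \<in> J \<rightarrow>\<^sub>M Mw"
    using measurable_snd unfolding measurable_cong_sets[OF sJ refl] .
  have Xm: "(\<lambda>dw. fst dw (k, i)) \<in> J \<rightarrow>\<^sub>M Ms" if "k < K" "i < n k" for k i
  proof -
    have "(k, i) \<in> sample_index K n" using that by (simp add: sample_index_def)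
    then show ?thesis unfolding measurable_cong_sets[OF sJ refl]
      by (intro measurable_comp[OF measurable_fst, unfolded comp_def] measurable_component_singleton)
  qed
  have marg: "distr J Ms (\<lambda>dw. fst dw (k, i)) = \<pi> k" if "k < K" "i < n k" for k i
  proof -
    have "(k, i) \<in> sample_index K n" using that by (simp add: sample_index_def)
    from D.marg_J[OF this] show ?thesis unfolding J_def by simp
  qed
  have PWeq: "PW = distr J Mw snd" unfolding PW_def ..
  have Lm: "(\<lambda>dw. loss (fst dw (k, i)) (snd dw)) \<in> borel_measurable J" if "k < K" "i < n k" for k i
    using measurable_comp[OF measurable_Pair[OF Xm[OF that] Ym] loss_meas] by (simp add: comp_def)
  have Lnn: "0 \<le> loss (fst dw (k, i)) (snd dw)" if "k < K" "i < n k" "dw \<in> space J" for k i dw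
    using loss_nonneg measurable_space[OF Xm[OF that(1,2)] that(3)] measurable_space[OF Ym that(3)] by blast
  define c where "c k = (\<integral>y. loss (fst y) (snd y) \<partial>(\<pi> k \<Otimes>\<^sub>M PW))" for k
  define E where "E k i = (\<integral>dw. loss (fst dw (k, i)) (snd dw) \<partial>J)" for k i
  define IP where "IP k i = legendre_dual_inv (\<psi>p k) (bp k) (mutual_info J Ms Mw (\<lambda>dw. fst dw (k, i)) snd)" for k i
  define IM where "IM k i = legendre_dual_inv (\<psi>m k) (bm k) (mutual_info J Ms Mw (\<lambda>dw. fst dw (k, i)) snd)" for k i
  have pb: "0 \<le> IP k i \<and> 0 \<le> IM k i \<and>
      (integrable J (\<lambda>dw. loss (fst dw (k, i)) (snd dw)) \<longrightarrow>
        ereal (E k i - c k) \<le> IP k i \<and> ereal (c k - E k i) \<le> IM k i)"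
    if ki: "k < K" "i < n k" for k i
    unfolding IP_def IM_def E_def c_def
    by (rule pair_bound[OF Jp Xm[OF ki] Ym marg[OF ki] PWeq loss_meas loss_int[OF ki(1)]
          cgf_p[OF ki(1)] cgf_m[OF ki(1)]])
  define G where "G dw = (\<Sum>k<K. \<Sum>i<n k. (1 / N) * (pop_risk loss (\<pi> k) (snd dw) - loss (fst dw (k, i)) (snd dw)))" for dw
  have gen_eq: "gen_error Ms Mw loss K n \<pi> \<kappa> \<phi> = (\<integral>dw. G dw \<partial>J)"
    unfolding gen_error_def J_def[symmetric] G_def N_def
    by (intro Bochner_Integration.integral_cong refl G_eq[OF n_pos])
  obtain Dl where Dgen: "gen_error Ms Mw loss K n \<pi> \<kappa> \<phi> = (1 / N) * (\<Sum>k<K. \<Sum>i<n k. Dl k i)"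
    and Db: "\<And>k i. k < K \<Longrightarrow> i < n k \<Longrightarrow> ereal (- Dl k i) \<le> IP k i \<and> ereal (Dl k i) \<le> IM k i"
  proof (cases "integrable J G")
    case False
    show ?thesis
    proof (rule that[of "\<lambda>_ _. 0"])
      show "gen_error Ms Mw loss K n \<pi> \<kappa> \<phi> = (1 / N) * (\<Sum>k<K. \<Sum>i<n k. 0)"
        unfolding gen_eq using False by (simp add: not_integrable_integral_eq)
      fix k i assume "k < K" "i < n k"
      then show "ereal (- 0) \<le> IP k i \<and> ereal 0 \<le> IM k i"
        using pb[of k i] by (simp add: zero_ereal_def[symmetric])
    qed
  next
    case True
    have PWp: "prob_space PW" unfolding PWeq by (rule Jp.prob_space_distr) simp
    interpret PWp: prob_space PW by (rule PWp)
    have sPW: "sets PW = sets Mw" unfolding PWeq by simp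
    have popint: "integrable J (\<lambda>dw. pop_risk loss (\<pi> k) (snd dw)) \<and>
        (\<integral>dw. pop_risk loss (\<pi> k) (snd dw) \<partial>J) = c k" if k: "k < K" for k
    proof -
      interpret pk: prob_space "\<pi> k" by (rule pi_prob[OF k])
      interpret ps: pair_sigma_finite "\<pi> k" PW
        using pk.sigma_finite_measure_axioms PWp.sigma_finite_measure_axioms
        by (simp add: pair_sigma_finite_def)
      have eqf: "(\<lambda>sw. loss (fst sw) (snd sw)) = case_prod loss" by (rule ext) (simp add: split_beta)
      have li: "integrable (\<pi> k \<Otimes>\<^sub>M PW) (case_prod loss)" using loss_int[OF k] unfolding eqf .
      have ip: "integrable PW (pop_risk loss (\<pi> k))"
        using ps.integrable_snd[OF li] unfolding pop_risk_def[abs_def] .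
      have ie: "(\<integral>y. pop_risk loss (\<pi> k) y \<partial>PW) = c k"
        using ps.integral_snd[OF li] unfolding pop_risk_def c_def eqf .
      have pm: "pop_risk loss (\<pi> k) \<in> borel_measurable Mw"
        using borel_measurable_integrable[OF ip] measurable_cong_sets[OF sPW refl] by blast
      show ?thesis
        using ip ie unfolding PWeq
        by (simp add: integrable_distr_eq[OF Ym pm] integral_distr[OF Ym pm])
    qed
    define T where "T dw = (\<Sum>k<K. \<Sum>i<n k. loss (fst dw (k, i)) (snd dw))" for dw
    have T_eq: "T dw = N * ((\<Sum>k<K. \<Sum>i<n k. (1 / N) * pop_risk loss (\<pi> k) (snd dw)) - G dw)" for dw
      unfolding T_def G_def using Npos
      by (simp add: sum_subtractf sum_distrib_left right_diff_distrib)
    have i1: "integrable J (\<lambda>dw. \<Sum>k<K. \<Sum>i<n k. (1 / N) * pop_risk loss (\<pi> k) (snd dw))"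
      by (intro Bochner_Integration.integrable_sum integrable_mult_right) (use popint in auto)
    have "integrable J (\<lambda>dw. T dw)" unfolding T_eq
      by (intro integrable_mult_right Bochner_Integration.integrable_diff i1 True)
    then have Tint: "integrable J T" by simp
    have Lint: "integrable J (\<lambda>dw. loss (fst dw (k, i)) (snd dw))" if ki: "k < K" "i < n k" for k i
    proof (rule Bochner_Integration.integrable_bound[OF Tint Lm[OF ki]])
      show "AE dw in J. norm (loss (fst dw (k, i)) (snd dw)) \<le> norm (T dw)"
      proof (rule AE_I2)
        fix dw assume dw: "dw \<in> space J"
        have "loss (fst dw (k, i)) (snd dw) \<le> (\<Sum>i<n k. loss (fst dw (k, i)) (snd dw))"
          using ki dw Lnn by (intro member_le_sum) auto
        also have "\<dots> \<le> T dw" unfolding T_def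
          using ki dw Lnn by (intro member_le_sum sum_nonneg) auto
        finally show "norm (loss (fst dw (k, i)) (snd dw)) \<le> norm (T dw)"
          using Lnn[OF ki dw] by simp
      qed
    qed
    have "(\<integral>dw. G dw \<partial>J) = (\<Sum>k<K. \<integral>dw. (\<Sum>i<n k. (1 / N) * (pop_risk loss (\<pi> k) (snd dw) - loss (fst dw (k, i)) (snd dw))) \<partial>J)"
      unfolding G_def
      by (rule Bochner_Integration.integral_sum)
        (intro Bochner_Integration.integrable_sum integrable_mult_right Bochner_Integration.integrable_diff; use popint Lint in auto)
    also have "\<dots> = (\<Sum>k<K. \<Sum>i<n k. (1 / N) * (c k - E k i))"
    proof (rule sum.cong[OF refl])
      fix k assume k: "k \<in> {..<K}"
      have pk: "integrable J (\<lambda>dw. pop_risk loss (\<pi> k) (snd dw))"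
        and pk2: "(\<integral>dw. pop_risk loss (\<pi> k) (snd dw) \<partial>J) = c k" using popint k by auto
      have lk: "integrable J (\<lambda>dw. loss (fst dw (k, i)) (snd dw))" if "i \<in> {..<n k}" for i
        using Lint k that by auto
      have "(\<integral>dw. (\<Sum>i<n k. (1 / N) * (pop_risk loss (\<pi> k) (snd dw) - loss (fst dw (k, i)) (snd dw))) \<partial>J)
          = (\<Sum>i<n k. \<integral>dw. (1 / N) * (pop_risk loss (\<pi> k) (snd dw) - loss (fst dw (k, i)) (snd dw)) \<partial>J)"
        by (rule Bochner_Integration.integral_sum)
          (intro integrable_mult_right Bochner_Integration.integrable_diff pk lk; simp)
      also have "\<dots> = (\<Sum>i<n k. (1 / N) * (c k - E k i))"
      proof (rule sum.cong[OF refl])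
        fix i assume i: "i \<in> {..<n k}"
        show "(\<integral>dw. (1 / N) * (pop_risk loss (\<pi> k) (snd dw) - loss (fst dw (k, i)) (snd dw)) \<partial>J)
           = (1 / N) * (c k - E k i)"
          unfolding E_def
          by (simp only: integral_mult_right_zero Bochner_Integration.integral_diff[OF pk lk[OF i]] pk2)
      qed
      finally show "(\<integral>dw. (\<Sum>i<n k. (1 / N) * (pop_risk loss (\<pi> k) (snd dw) - loss (fst dw (k, i)) (snd dw))) \<partial>J)
          = (\<Sum>i<n k. (1 / N) * (c k - E k i))" .
    qed
    finally have "(\<integral>dw. G dw \<partial>J) = (\<Sum>k<K. \<Sum>i<n k. (1 / N) * (c k - E k i))" .
    then have "gen_error Ms Mw loss K n \<pi> \<kappa> \<phi> = (1 / N) * (\<Sum>k<K. \<Sum>i<n k. c k - E k i)"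
      unfolding gen_eq by (simp add: sum_distrib_left)
    then show ?thesis
    proof (rule that)
      fix k i assume ki: "k < K" "i < n k"
      then show "ereal (- (c k - E k i)) \<le> IP k i \<and> ereal (c k - E k i) \<le> IM k i"
        using pb[OF ki] Lint[OF ki] by simp
    qed
  qed
  have h0: "0 \<le> 1 / N" using Npos by simp
  have fa: "- (ereal (1 / N) * (\<Sum>k<K. \<Sum>i<n k. IP k i)) \<le> ereal (gen_error Ms Mw loss K n \<pi> \<kappa> \<phi>)
      \<and> ereal (gen_error Ms Mw loss K n \<pi> \<kappa> \<phi>) \<le> ereal (1 / N) * (\<Sum>k<K. \<Sum>i<n k. IM k i)"
    by (rule final_assembly[OF h0 Dgen]) (use Db in auto)
  then show ?thesis unfolding IP_def IM_def N_def .
qed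

end
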